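(* Let $u,v\ge0$ be integers and let $\beta^{i,j}$ ($0\le i\le u$, $0\le j\le v+1$) be integers such that: (1) all $\beta^{i,j}$ are nonnegative; (2) $\beta^{0,0},\beta^{0,1},\ldots,\beta^{0,v}$ are strictly positive; (3) $\beta^{0,v+1}=0$; (4) for each $0\le i\le u-1$ and $0\le j\le v$, $$\delta^{i,j}:=\beta^{i,j}+\beta^{i+1,j+1}-\beta^{i,j+1}-\beta^{i+1,j}\le0.$$ Then $\beta^{i,j}>0$ for all $0\le i\le u$ and $0\le j\le v$. *)

theory Defs
  imports Main
begin

end

theory Submission
  imports Defs
begin

theorem lemma4p6:
  fixes u v :: nat and \<beta> :: "nat \<Rightarrow> nat \<Rightarrow> int"
  assumes nonneg: "\<And>i j. i \<le> u \<Longrightarrow> j \<le> v + 1 \<Longrightarrow> \<beta> i j \<ge> 0"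
    and pos0: "\<And>j. j \<le> v \<Longrightarrow> \<beta> 0 j > 0"
    and zero: "\<beta> 0 (v + 1) = 0"
    and delta: "\<And>i j. i + 1 \<le> u \<Longrightarrow> j \<le> v \<Longrightarrow>
                  \<beta> i j + \<beta> (i + 1) (j + 1) - \<beta> i (j + 1) - \<beta> (i + 1) j \<le> 0"
  shows "\<forall>i\<le>u. \<forall>j\<le>v. \<beta> i j > 0"
proof -
  have step: "\<beta> (i+1) (v+1-k) - \<beta> (i+1) (v+1) \<ge> \<beta> i (v+1-k) - \<beta> i (v+1)"
    if "i + 1 \<le> u" "k \<le> v + 1" for i k
    using that(2)
  proof (induction k)
    case 0 then show ?case by simp
  next
    case (Suc k)
    have j: "v + 1 - k = (v - k) + 1" using Suc.prems by simp
    have "v + 1 - Suc k = v - k" by simp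
    moreover have "\<beta> i (v-k) + \<beta> (i + 1) (v-k + 1) - \<beta> i (v-k + 1) - \<beta> (i + 1) (v-k) \<le> 0"
      using delta[OF that(1), of "v-k"] by simp
    ultimately show ?case using Suc j by simp
  qed
  have main: "\<beta> i j - \<beta> i (v+1) \<ge> \<beta> 0 j - \<beta> 0 (v+1)" if "i \<le> u" "j \<le> v + 1" for i j
    using that(1)
  proof (induction i)
    case 0 then show ?case by simp
  next
    case (Suc i)
    have "v + 1 - (v + 1 - j) = j" using that(2) by simp
    then have "\<beta> (i+1) j - \<beta> (i+1) (v+1) \<ge> \<beta> i j - \<beta> i (v+1)"
      using step[of i "v+1-j"] Suc.prems by simp
    then show ?case using Suc by simp
  qed
  show ?thesis
  proof (intro allI impI)
    fix i j assume "i \<le> u" "j \<le> v"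
    then show "\<beta> i j > 0" using main[of i j] nonneg[of i "v+1"] pos0[of j] zero by simp
  qed
qed

end
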